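(* Let $d\ge2$, let $\Gamma\subset\mathbb R^d$ be a closed (compact, boundaryless) hypersurface of class $C^3$ with interior $\Omega_-$ and exterior $\Omega_+$, and let $n$ be the unit normal on $\Gamma$ pointing from $\Omega_-$ to $\Omega_+$. Let $V\in C^2_{\rm c}(\mathbb R^d,\mathbb R^d)$ and for $t\in\mathbb R$, $X\in\mathbb R^d$ let $T_t(X)=x(t,X)$, where $x(\cdot,X)$ solves $\dot x=V(x)$, $x(0,X)=X$. If $V\cdot n=0$ on $\Gamma$, then there exist $t_0>0$ and $C>0$, depending on $\Gamma$ and $V$, such that $$\mathrm{dist}(T_t(X),\Gamma)\le Ct^2\qquad\text{for all }X\in\Gamma\text{ and all }t\in\mathbb R\text{ with }|t|\le t_0,$$ and $$\big|\{x\in\mathbb R^d:\chi_{T_t(\Omega_{\rm s})}(x)\ne\chi_{\Omega_{\rm s}}(x)\}\big|\le Ct^2\qquad\text{if }|t|\le t_0,\ {\rm s}=-\text{ or }+,$$ where $|\cdot|$ denotes Lebesgue measure and $\chi_A$ is the characteristic function of $A$. *)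

theory Defs
  imports "HOL-Analysis.Analysis"
begin

fun Ck_on :: "nat \<Rightarrow> 'a::euclidean_space set \<Rightarrow> ('a \<Rightarrow> 'b::real_normed_vector) \<Rightarrow> bool" where
  "Ck_on 0 S f = continuous_on S f"
| "Ck_on (Suc k) S f =
     (f differentiable_on S \<and>
      (\<forall>v\<in>Basis. Ck_on k S (\<lambda>x. frechet_derivative f (at x) v)))"

definition local_C3_defining_fun :: "'a::euclidean_space set \<Rightarrow> 'a \<Rightarrow> 'a set \<Rightarrow> ('a \<Rightarrow> real) \<Rightarrow> bool" where
  "local_C3_defining_fun \<Gamma> p U \<phi> \<longleftrightarrow>
     open U \<and> p \<in> U \<and> Ck_on 3 U \<phi> \<and>
     (\<forall>x\<in>U. x \<in> \<Gamma> \<longleftrightarrow> \<phi> x = 0) \<and>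
     (\<forall>x\<in>U \<inter> \<Gamma>. frechet_derivative \<phi> (at x) \<noteq> (\<lambda>_. 0))"

definition C3_closed_hypersurface :: "'a::euclidean_space set \<Rightarrow> bool" where
  "C3_closed_hypersurface \<Gamma> \<longleftrightarrow>
     compact \<Gamma> \<and> \<Gamma> \<noteq> {} \<and> (\<forall>p\<in>\<Gamma>. \<exists>U \<phi>. local_C3_defining_fun \<Gamma> p U \<phi>)"

text \<open>n is a unit normal field on Gamma: unit length and orthogonal to the tangent
  space (the kernel of the differential of any local defining function).\<close>
definition unit_normal_field :: "'a::euclidean_space set \<Rightarrow> ('a \<Rightarrow> 'a) \<Rightarrow> bool" where
  "unit_normal_field \<Gamma> n \<longleftrightarrow>
     (\<forall>p\<in>\<Gamma>. norm (n p) = 1 \<and>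
        (\<forall>U \<phi>. local_C3_defining_fun \<Gamma> p U \<phi> \<longrightarrow>
           (\<forall>v. frechet_derivative \<phi> (at p) v = 0 \<longrightarrow> n p \<bullet> v = 0)))"

end

theory Submission
  imports Defs
begin

lemma lipschitz_from_partials:
  fixes f :: "'a::euclidean_space \<Rightarrow> 'b::real_normed_vector"
  assumes "convex S"
    and der: "\<And>x. x \<in> S \<Longrightarrow> (f has_derivative f' x) (at x within S)"
    and bnd: "\<And>x b. x \<in> S \<Longrightarrow> b \<in> Basis \<Longrightarrow> norm (f' x b) \<le> B"
    and "x \<in> S" "y \<in> S"
  shows "norm (f x - f y) \<le> (real DIM('a) * B) * norm (x - y)"
proof (rule differentiable_bound[OF assms(1) der _ assms(4,5)])
  fix z assume z: "z \<in> S"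
  have lin: "linear (f' z)" using der[OF z] has_derivative_linear by blast
  show "onorm (f' z) \<le> real DIM('a) * B"
  proof (rule onorm_le)
    fix v :: 'a
    have "f' z v = f' z (\<Sum>b\<in>Basis. (v \<bullet> b) *\<^sub>R b)" by (simp add: euclidean_representation)
    also have "\<dots> = (\<Sum>b\<in>Basis. (v \<bullet> b) *\<^sub>R f' z b)"
      using lin by (simp add: linear_sum linear_scale)
    finally have "norm (f' z v) \<le> (\<Sum>b\<in>Basis. norm ((v \<bullet> b) *\<^sub>R f' z b))"
      by (metis norm_sum)
    also have "\<dots> \<le> (\<Sum>b\<in>(Basis::'a set). norm v * B)"
    proof (intro sum_mono)
      fix b :: 'a assume b: "b \<in> Basis"
      have "\<bar>v \<bullet> b\<bar> * norm (f' z b) \<le> norm v * B"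
        by (rule mult_mono) (auto simp: Basis_le_norm b bnd z)
      then show "norm ((v \<bullet> b) *\<^sub>R f' z b) \<le> norm v * B" by simp
    qed
    also have "\<dots> = real DIM('a) * B * norm v" by simp
    finally show "norm (f' z v) \<le> real DIM('a) * B * norm v" .
  qed
qed

lemma Ck_imp_cont:
  assumes "Ck_on k U f"
  shows "continuous_on U f"
  using assms by (cases k) (auto intro: differentiable_imp_continuous_on)

lemma Ck_Suc_D:
  assumes "Ck_on (Suc k) U f" "open U"
  shows "f differentiable_on U"
    and "\<And>x. x \<in> U \<Longrightarrow> (f has_derivative frechet_derivative f (at x)) (at x)"
    and "\<And>b. b \<in> Basis \<Longrightarrow> Ck_on k U (\<lambda>x. frechet_derivative f (at x) b)"
    and "\<And>b. b \<in> Basis \<Longrightarrow> continuous_on U (\<lambda>x. frechet_derivative f (at x) b)"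
proof -
  show d: "f differentiable_on U" using assms by simp
  show "\<And>x. x \<in> U \<Longrightarrow> (f has_derivative frechet_derivative f (at x)) (at x)"
    using d assms(2) by (simp add: differentiable_on_eq_differentiable_at frechet_derivative_works)
  show "\<And>b. b \<in> Basis \<Longrightarrow> Ck_on k U (\<lambda>x. frechet_derivative f (at x) b)" using assms by simp
  then show "\<And>b. b \<in> Basis \<Longrightarrow> continuous_on U (\<lambda>x. frechet_derivative f (at x) b)"
    using Ck_imp_cont by blast
qed

lemma C1_lipschitz_on:
  fixes f :: "'a::euclidean_space \<Rightarrow> 'b::real_normed_vector"
  assumes U: "open U" and d: "f differentiable_on U"
    and c: "\<And>b. b \<in> Basis \<Longrightarrow> continuous_on U (\<lambda>x. frechet_derivative f (at x) b)"
    and K: "compact K" "convex K" "K \<subseteq> U"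
  shows "\<exists>L\<ge>0. \<forall>x\<in>K. \<forall>y\<in>K. norm (f x - f y) \<le> L * norm (x - y)"
proof -
  define h where "h x = (\<Sum>b\<in>Basis. norm (frechet_derivative f (at x) b))" for x
  have "continuous_on K h"
    unfolding h_def using c K(3)
    by (intro continuous_intros) (auto intro: continuous_on_subset)
  then have "bounded (h ` K)" using K(1) compact_continuous_image compact_imp_bounded by blast
  then obtain B where B: "\<And>x. x \<in> K \<Longrightarrow> norm (h x) \<le> B" unfolding bounded_iff by blast
  have hb: "norm (frechet_derivative f (at x) b) \<le> B" if "x \<in> K" "b \<in> Basis" for x b
  proof -
    have "norm (frechet_derivative f (at x) b) \<le> h x"
      unfolding h_def by (rule member_le_sum) (auto simp: that)
    also have "\<dots> \<le> B" using B[OF that(1)] by simp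
    finally show ?thesis .
  qed
  have B0: "0 \<le> B" if "x \<in> K" for x using hb[OF that, of "SOME b. b \<in> Basis"]
    by (metis SOME_Basis norm_ge_zero order_trans)
  have der: "(f has_derivative frechet_derivative f (at x)) (at x within K)" if "x \<in> K" for x
  proof -
    have "f differentiable at x" using d U K(3) that
      by (meson differentiable_on_eq_differentiable_at subsetD)
    then show ?thesis using frechet_derivative_works has_derivative_at_withinI by blast
  qed
  show ?thesis
  proof (cases "K = {}")
    case True then show ?thesis by auto
  next
    case False
    then obtain x0 where "x0 \<in> K" by blast
    show ?thesis
      apply (rule exI[of _ "real DIM('a) * B"])
      using lipschitz_from_partials[OF K(2) der hb] B0[OF \<open>x0 \<in> K\<close>] by auto
  qed
qed

lemma flow_lip:
  fixes u :: "real \<Rightarrow> 'a::real_normed_vector"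
  assumes du: "\<And>t. (u has_vector_derivative F (u t)) (at t)"
    and M: "\<And>x. norm (F x) \<le> M"
  shows "norm (u t - u s) \<le> M * \<bar>t - s\<bar>"
proof -
  have "norm (u t - u s) \<le> M * norm (t - s)"
  proof (rule differentiable_bound[of "closed_segment s t" u "\<lambda>x h. h *\<^sub>R F (u x)"])
    show "convex (closed_segment s t)" by simp
    fix x assume "x \<in> closed_segment s t"
    show "(u has_derivative (\<lambda>h. h *\<^sub>R F (u x))) (at x within closed_segment s t)"
      using du[of x] by (simp add: has_vector_derivative_def has_derivative_at_withinI)
    show "onorm (\<lambda>h. h *\<^sub>R F (u x)) \<le> M"
    proof (rule onorm_le)
      fix h :: real
      show "norm (h *\<^sub>R F (u x)) \<le> M * norm h"
      proof -
        have "\<bar>h\<bar> * norm (F (u x)) \<le> \<bar>h\<bar> * M" using M[of "u x"] by (simp add: mult_left_mono)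
        then show ?thesis by (simp add: mult.commute)
      qed
    qed
  qed auto
  then show ?thesis by simp
qed


lemma ode_unique_fwd:
  fixes u w :: "real \<Rightarrow> 'a::real_inner"
  assumes du: "\<And>s. (u has_vector_derivative F (u s)) (at s)"
    and dw: "\<And>s. (w has_vector_derivative F (w s)) (at s)"
    and lip: "\<And>x y. x \<in> K \<Longrightarrow> y \<in> K \<Longrightarrow> norm (F x - F y) \<le> L * norm (x - y)"
    and inK: "\<And>s. 0 \<le> s \<Longrightarrow> s \<le> t \<Longrightarrow> u s \<in> K \<and> w s \<in> K"
    and eq0: "u 0 = w 0" and t: "0 \<le> t" and L: "0 \<le> L"
  shows "u t = w t"
proof -
  define k where "k s = exp (- 2 * L * s) * ((u s - w s) \<bullet> (u s - w s))" for s
  have "k t \<le> k 0"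
  proof (rule DERIV_nonpos_imp_nonincreasing[OF t])
    fix s assume s: "0 \<le> s" "s \<le> t"
    let ?d = "u s - w s"
    let ?D = "F (u s) - F (w s)"
    have dd: "((\<lambda>s. u s - w s) has_vector_derivative ?D) (at s)"
      using du[of s] dw[of s] by (intro derivative_intros)
    have q: "((\<lambda>s. (u s - w s) \<bullet> (u s - w s)) has_real_derivative (?D \<bullet> ?d + ?d \<bullet> ?D)) (at s)"
      unfolding has_field_derivative_def
      apply (rule has_derivative_eq_rhs)
       apply (rule has_derivative_inner[OF dd[unfolded has_vector_derivative_def] dd[unfolded has_vector_derivative_def]])
      by (auto simp: fun_eq_iff algebra_simps inner_commute)
    have "(k has_real_derivative
        (- 2 * L) * exp (- 2 * L * s) * (?d \<bullet> ?d) + exp (- 2 * L * s) * (?D \<bullet> ?d + ?d \<bullet> ?D)) (at s)"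
      unfolding k_def
      by (rule derivative_eq_intros refl q | simp)+
    moreover have "(- 2 * L) * exp (- 2 * L * s) * (?d \<bullet> ?d) + exp (- 2 * L * s) * (?D \<bullet> ?d + ?d \<bullet> ?D) \<le> 0"
    proof -
      have "?d \<bullet> ?D \<le> norm ?d * norm ?D" by (rule norm_cauchy_schwarz)
      also have "\<dots> \<le> norm ?d * (L * norm ?d)"
        using lip inK[OF s] by (simp add: mult_left_mono)
      finally have X: "?d \<bullet> ?D \<le> L * (norm ?d * norm ?d)" by (simp add: algebra_simps)
      have "?d \<bullet> ?d = norm ?d * norm ?d" by (simp add: dot_square_norm power2_eq_square)
      then have "?D \<bullet> ?d + ?d \<bullet> ?D \<le> 2 * L * (?d \<bullet> ?d)" using X by (simp add: inner_commute)
      then have "exp (- 2 * L * s) * (?D \<bullet> ?d + ?d \<bullet> ?D) \<le> exp (- 2 * L * s) * (2 * L * (?d \<bullet> ?d))"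
        by (simp add: mult_left_mono)
      then show ?thesis by (simp add: algebra_simps)
    qed
    ultimately show "\<exists>y. (k has_real_derivative y) (at s) \<and> y \<le> 0" by blast
  qed
  moreover have "k 0 = 0" by (simp add: k_def eq0)
  moreover have "k t \<ge> 0" by (simp add: k_def)
  ultimately have "k t = 0" by simp
  then show ?thesis by (simp add: k_def)
qed

lemma seg_abs_le: "(s::real) \<in> closed_segment 0 t \<Longrightarrow> \<bar>s\<bar> \<le> \<bar>t\<bar>"
  by (auto simp: closed_segment_eq_real_ivl split: if_splits)

lemma ode_unique:
  fixes u w :: "real \<Rightarrow> 'a::real_inner"
  assumes du: "\<And>s. (u has_vector_derivative F (u s)) (at s)"
    and dw: "\<And>s. (w has_vector_derivative F (w s)) (at s)"
    and lip: "\<And>x y. x \<in> K \<Longrightarrow> y \<in> K \<Longrightarrow> norm (F x - F y) \<le> L * norm (x - y)"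
    and inK: "\<And>s. s \<in> closed_segment 0 t \<Longrightarrow> u s \<in> K \<and> w s \<in> K"
    and eq0: "u 0 = w 0" and L: "0 \<le> L"
  shows "u t = w t"
proof (cases "0 \<le> t")
  case True
  show ?thesis
    by (rule ode_unique_fwd[OF du dw lip _ eq0 True L])
       (use inK True in \<open>auto simp: closed_segment_eq_real_ivl\<close>)
next
  case False
  have m: "(uminus has_vector_derivative (-1::real)) (at s)" for s :: real
    by (auto intro!: derivative_eq_intros)
  have du': "((u \<circ> uminus) has_vector_derivative (\<lambda>x. - F x) ((u \<circ> uminus) s)) (at s)" for s
    using vector_diff_chain_at[OF m du[of "-s"]] by simp
  have dw': "((w \<circ> uminus) has_vector_derivative (\<lambda>x. - F x) ((w \<circ> uminus) s)) (at s)" for s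
    using vector_diff_chain_at[OF m dw[of "-s"]] by simp
  have "(u \<circ> uminus) (-t) = (w \<circ> uminus) (-t)"
  proof (rule ode_unique_fwd[OF du' dw', of K L])
    show "norm (- F x - - F y) \<le> L * norm (x - y)" if "x \<in> K" "y \<in> K" for x y
      using lip[OF that] by (simp add: norm_minus_commute)
    show "(u \<circ> uminus) s \<in> K \<and> (w \<circ> uminus) s \<in> K" if "0 \<le> s" "s \<le> - t" for s
      using inK[of "-s"] that False by (auto simp: closed_segment_eq_real_ivl)
  qed (use eq0 False L in auto)
  then show ?thesis by simp
qed

lemma flow_group:
  fixes T :: "real \<Rightarrow> 'a::euclidean_space \<Rightarrow> 'a"
  assumes flow: "\<And>X t. ((\<lambda>s. T s X) has_vector_derivative V (T t X)) (at t)"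
    and flow0: "\<And>X. T 0 X = X"
    and M: "\<And>x. norm (V x) \<le> M"
    and lipV: "\<And>K. compact K \<Longrightarrow> convex K \<Longrightarrow> \<exists>L\<ge>0. \<forall>x\<in>K. \<forall>y\<in>K. norm (V x - V y) \<le> L * norm (x - y)"
  shows "T t (T s X) = T (t + s) X"
proof -
  define K where "K = cball (T s X) (M * \<bar>t\<bar>)"
  obtain L where L: "L \<ge> 0" "\<And>x y. x \<in> K \<Longrightarrow> y \<in> K \<Longrightarrow> norm (V x - V y) \<le> L * norm (x - y)"
    using lipV[of K] unfolding K_def by (metis compact_cball convex_cball)
  have M0: "0 \<le> M" using M[of 0] norm_ge_zero order_trans by blast
  have p: "((\<lambda>\<tau>. \<tau> + s) has_vector_derivative (1::real)) (at \<tau>)" for \<tau> :: real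
    by (auto intro!: derivative_eq_intros)
  have dw: "((\<lambda>\<tau>. T (\<tau> + s) X) has_vector_derivative V (T (\<tau> + s) X)) (at \<tau>)" for \<tau>
    using vector_diff_chain_at[OF p flow[of X "\<tau> + s"]] by (simp add: o_def)
  have e0: "T 0 (T s X) = T (0 + s) X" using flow0 by simp
  have "(\<lambda>\<tau>. T \<tau> (T s X)) t = (\<lambda>\<tau>. T (\<tau> + s) X) t"
  proof (rule ode_unique[OF flow dw L(2) _ _ L(1)])
    fix \<tau> assume \<tau>: "\<tau> \<in> closed_segment 0 t"
    have a: "\<bar>\<tau>\<bar> \<le> \<bar>t\<bar>" using seg_abs_le[OF \<tau>] .
    have "norm (T \<tau> (T s X) - T 0 (T s X)) \<le> M * \<bar>\<tau> - 0\<bar>"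
      by (rule flow_lip[OF flow M])
    moreover have "norm (T (\<tau> + s) X - T (0 + s) X) \<le> M * \<bar>\<tau> - 0\<bar>"
      by (rule flow_lip[OF dw M])
    ultimately show "T \<tau> (T s X) \<in> K \<and> T (\<tau> + s) X \<in> K"
      unfolding K_def using a M0 flow0
      by (auto simp: dist_norm norm_minus_commute intro: order_trans[OF _ mult_left_mono[OF a M0]])
  qed (use e0 in auto)
  then show ?thesis by simp
qed


lemma seg_in:
  fixes x e :: "'a::real_normed_vector"
  assumes "convex S" "x \<in> S" "x + s *\<^sub>R e \<in> S" "0 \<le> \<sigma>" "\<sigma> \<le> s"
  shows "x + \<sigma> *\<^sub>R e \<in> S"
proof (cases "s = 0")
  case True then show ?thesis using assms by simp
next
  case False
  then have s: "s > 0" using assms by simp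
  have "(1 - \<sigma>/s) *\<^sub>R x + (\<sigma>/s) *\<^sub>R (x + s *\<^sub>R e) \<in> S"
    using assms s by (intro convexD) (auto simp: field_simps)
  moreover have "(1 - \<sigma>/s) *\<^sub>R x + (\<sigma>/s) *\<^sub>R (x + s *\<^sub>R e) = x + \<sigma> *\<^sub>R e"
    using s by (simp add: algebra_simps)
  ultimately show ?thesis by simp
qed

lemma line_deriv:
  assumes "(\<phi> has_derivative D) (at (x + \<sigma> *\<^sub>R e))"
  shows "((\<lambda>\<sigma>. \<phi> (x + \<sigma> *\<^sub>R e)) has_real_derivative D e) (at \<sigma>)"
proof -
  have l: "((\<lambda>\<sigma>. x + \<sigma> *\<^sub>R e) has_derivative (\<lambda>h. h *\<^sub>R e)) (at \<sigma>)"
    by (auto intro!: derivative_eq_intros)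
  have lin: "linear D" using assms has_derivative_linear by blast
  have "((\<lambda>\<sigma>. \<phi> (x + \<sigma> *\<^sub>R e)) has_derivative (\<lambda>h. D (h *\<^sub>R e))) (at \<sigma>)"
    using diff_chain_at[OF l assms] by (simp add: o_def)
  moreover have "(\<lambda>h. D (h *\<^sub>R e)) = (*) (D e)"
    using lin by (auto simp: fun_eq_iff linear_scale)
  ultimately show ?thesis by (simp add: has_field_derivative_def)
qed

lemma line_mono:
  fixes \<phi> :: "'a::real_normed_vector \<Rightarrow> real"
  assumes der: "\<And>x. x \<in> S \<Longrightarrow> (\<phi> has_derivative D x) (at x)"
    and De: "\<And>x. x \<in> S \<Longrightarrow> D x e \<ge> c"
    and S: "convex S" and x: "x \<in> S" "x + s *\<^sub>R e \<in> S" and s: "0 \<le> s"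
  shows "\<phi> (x + s *\<^sub>R e) - \<phi> x \<ge> c * s"
proof -
  have "(\<lambda>\<sigma>. \<phi> (x + \<sigma> *\<^sub>R e) - c * \<sigma>) 0 \<le> (\<lambda>\<sigma>. \<phi> (x + \<sigma> *\<^sub>R e) - c * \<sigma>) s"
  proof (rule DERIV_nonneg_imp_nondecreasing[OF s])
    fix \<sigma> assume "0 \<le> \<sigma>" "\<sigma> \<le> s"
    then have inS: "x + \<sigma> *\<^sub>R e \<in> S" using seg_in[OF S x] by blast
    have "((\<lambda>\<sigma>. \<phi> (x + \<sigma> *\<^sub>R e) - c * \<sigma>) has_real_derivative D (x + \<sigma> *\<^sub>R e) e - c) (at \<sigma>)"
      by (rule derivative_eq_intros line_deriv der inS | simp)+
    then show "\<exists>y. ((\<lambda>\<sigma>. \<phi> (x + \<sigma> *\<^sub>R e) - c * \<sigma>) has_real_derivative y) (at \<sigma>) \<and> 0 \<le> y"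
      using De[OF inS] by force
  qed
  then show ?thesis by simp
qed

lemma zero_near:
  fixes \<phi> :: "'a::real_normed_vector \<Rightarrow> real"
  assumes der: "\<And>x. x \<in> cball p r \<Longrightarrow> (\<phi> has_derivative D x) (at x)"
    and De: "\<And>x. x \<in> cball p r \<Longrightarrow> D x e \<ge> c"
    and c: "c > 0" and e: "norm e = 1"
    and y: "y \<in> cball p (r/2)" and small: "\<bar>\<phi> y\<bar> \<le> c * r / 2"
  shows "\<exists>z\<in>cball p r. \<phi> z = 0 \<and> norm (y - z) \<le> \<bar>\<phi> y\<bar> / c"
proof -
  have cont: "continuous_on (cball p r) \<phi>"
    using der has_derivative_continuous continuous_at_imp_continuous_on by blast
  have inball: "y + \<sigma> *\<^sub>R e \<in> cball p r" if "\<bar>\<sigma>\<bar> \<le> r/2" for \<sigma>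
  proof -
    have "dist p (y + \<sigma> *\<^sub>R e) \<le> dist p y + dist y (y + \<sigma> *\<^sub>R e)"
      by (rule dist_triangle)
    also have "dist y (y + \<sigma> *\<^sub>R e) = \<bar>\<sigma>\<bar>" using e by (simp add: dist_norm)
    also have "dist p y + \<bar>\<sigma>\<bar> \<le> r/2 + r/2" using y that by (intro add_mono) auto
    finally show ?thesis by simp
  qed
  have "dist p y \<le> r/2" using y by simp
  then have yin: "y \<in> cball p r" using zero_le_dist[of p y] by (simp del: zero_le_dist)
  have inball2: "\<forall>\<sigma>\<in>{0..s}. y + \<sigma> *\<^sub>R e \<in> cball p r" if "s \<le> r/2" for s
    using inball that by auto
  have inball3: "\<forall>\<sigma>\<in>{0..s}. y + (-\<sigma>) *\<^sub>R e \<in> cball p r" if "s \<le> r/2" for s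
  proof
    fix \<sigma> assume "\<sigma> \<in> {0..s}"
    then have "\<bar>-\<sigma>\<bar> \<le> r/2" using that by auto
    then show "y + (-\<sigma>) *\<^sub>R e \<in> cball p r" by (rule inball)
  qed
  show ?thesis
  proof (cases "\<phi> y \<ge> 0")
    case True
    define s where "s = \<phi> y / c"
    have s0: "0 \<le> s" and sr: "s \<le> r/2" using True c small by (auto simp: s_def field_simps)
    have a1: "y + (-s) *\<^sub>R e \<in> cball p r" using inball[of "-s"] s0 sr by simp
    have a2: "(y + (-s) *\<^sub>R e) + s *\<^sub>R e \<in> cball p r" using yin by simp
    have m: "\<phi> ((y + (-s) *\<^sub>R e) + s *\<^sub>R e) - \<phi> (y + (-s) *\<^sub>R e) \<ge> c * s"
      by (rule line_mono[OF der De convex_cball a1 a2 s0])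
    then have neg: "\<phi> (y + (-s) *\<^sub>R e) \<le> 0" using c by (simp add: s_def)
    have "continuous_on {0..s} (\<lambda>\<sigma>. - \<phi> (y + (-\<sigma>) *\<^sub>R e))"
      apply (intro continuous_intros continuous_on_compose2[OF cont])
      using inball3[OF sr] by auto
    then obtain \<sigma> where \<sigma>: "0 \<le> \<sigma>" "\<sigma> \<le> s" "- \<phi> (y + (-\<sigma>) *\<^sub>R e) = 0"
      using IVT'[of "\<lambda>\<sigma>. - \<phi> (y + (-\<sigma>) *\<^sub>R e)" 0 0 s] neg True s0 by auto
    have zin: "y + (-\<sigma>) *\<^sub>R e \<in> cball p r" using inball3[OF sr] \<sigma> by auto
    have "norm (y - (y + (-\<sigma>) *\<^sub>R e)) = \<sigma>" using e \<sigma> by simp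
    then show ?thesis using zin \<sigma> True by (auto simp: s_def intro!: bexI[of _ "y + (-\<sigma>) *\<^sub>R e"])
  next
    case False
    define s where "s = - \<phi> y / c"
    have s0: "0 \<le> s" and sr: "s \<le> r/2" using False c small by (auto simp: s_def field_simps)
    have a1: "y + s *\<^sub>R e \<in> cball p r" using inball[of s] s0 sr by simp
    have m: "\<phi> (y + s *\<^sub>R e) - \<phi> y \<ge> c * s"
      by (rule line_mono[OF der De convex_cball yin a1 s0])
    then have pos: "\<phi> (y + s *\<^sub>R e) \<ge> 0" using c by (simp add: s_def)
    have "continuous_on {0..s} (\<lambda>\<sigma>. \<phi> (y + \<sigma> *\<^sub>R e))"
      apply (intro continuous_intros continuous_on_compose2[OF cont])
      using inball2[OF sr] by auto
    then obtain \<sigma> where \<sigma>: "0 \<le> \<sigma>" "\<sigma> \<le> s" "\<phi> (y + \<sigma> *\<^sub>R e) = 0"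
      using IVT'[of "\<lambda>\<sigma>. \<phi> (y + \<sigma> *\<^sub>R e)" 0 0 s] pos False s0 by auto
    have zin: "y + \<sigma> *\<^sub>R e \<in> cball p r" using inball2[OF sr] \<sigma> by auto
    have "norm (y - (y + \<sigma> *\<^sub>R e)) = \<sigma>" using e \<sigma> by simp
    then show ?thesis using zin \<sigma> False by (auto simp: s_def intro!: bexI[of _ "y + \<sigma> *\<^sub>R e"])
  qed
qed

lemma sq_bound:
  fixes \<phi> :: "'a::real_normed_vector \<Rightarrow> real" and u :: "real \<Rightarrow> 'a"
  assumes der: "\<And>x. x \<in> S \<Longrightarrow> (\<phi> has_derivative D x) (at x)"
    and du: "\<And>t. (u has_vector_derivative V (u t)) (at t)"
    and M: "\<And>x. norm (V x) \<le> M"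
    and glip: "\<And>x y. x \<in> S \<Longrightarrow> y \<in> S \<Longrightarrow> \<bar>D x (V x) - D y (V y)\<bar> \<le> Lg * norm (x - y)"
    and Lg: "0 \<le> Lg"
    and inS: "\<And>\<sigma>. \<sigma> \<in> closed_segment s0 t \<Longrightarrow> u \<sigma> \<in> S"
    and z0: "\<phi> (u s0) = 0" "D (u s0) (V (u s0)) = 0"
  shows "\<bar>\<phi> (u t)\<bar> \<le> Lg * M * (t - s0)\<^sup>2"
proof -
  have F: "((\<lambda>\<sigma>. \<phi> (u \<sigma>)) has_real_derivative D (u \<sigma>) (V (u \<sigma>))) (at \<sigma>)"
    if "\<sigma> \<in> closed_segment s0 t" for \<sigma>
  proof -
    have d1: "(u has_derivative (\<lambda>h. h *\<^sub>R V (u \<sigma>))) (at \<sigma>)"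
      using du[of \<sigma>] by (simp add: has_vector_derivative_def)
    have d2: "(\<phi> has_derivative D (u \<sigma>)) (at (u \<sigma>))" using der inS that by blast
    have lin: "linear (D (u \<sigma>))" using d2 has_derivative_linear by blast
    have "((\<lambda>\<sigma>. \<phi> (u \<sigma>)) has_derivative (\<lambda>h. D (u \<sigma>) (h *\<^sub>R V (u \<sigma>)))) (at \<sigma>)"
      using diff_chain_at[OF d1 d2] by (simp add: o_def)
    moreover have "(\<lambda>h. D (u \<sigma>) (h *\<^sub>R V (u \<sigma>))) = (*) (D (u \<sigma>) (V (u \<sigma>)))"
      using lin by (auto simp: fun_eq_iff linear_scale)
    ultimately show ?thesis by (simp add: has_field_derivative_def)
  qed
  have G: "\<bar>D (u \<sigma>) (V (u \<sigma>))\<bar> \<le> Lg * M * \<bar>t - s0\<bar>" if "\<sigma> \<in> closed_segment s0 t" for \<sigma>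
  proof -
    have "\<bar>D (u \<sigma>) (V (u \<sigma>))\<bar> = \<bar>D (u \<sigma>) (V (u \<sigma>)) - D (u s0) (V (u s0))\<bar>" using z0 by simp
    also have "\<dots> \<le> Lg * norm (u \<sigma> - u s0)"
      using glip inS that ends_in_segment(1) by blast
    also have "\<dots> \<le> Lg * (M * \<bar>\<sigma> - s0\<bar>)"
      using flow_lip[OF du M] Lg by (simp add: mult_left_mono)
    also have "\<dots> \<le> Lg * (M * \<bar>t - s0\<bar>)"
    proof -
      have "\<bar>\<sigma> - s0\<bar> \<le> \<bar>t - s0\<bar>" using dist_in_closed_segment[OF that] by (simp add: dist_real_def abs_minus_commute)
      moreover have "0 \<le> M" using M[of 0] norm_ge_zero order_trans by blast
      ultimately show ?thesis using Lg by (simp add: mult_left_mono)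
    qed
    finally show ?thesis by simp
  qed
  have "\<bar>\<phi> (u t)\<bar> \<le> \<bar>t - s0\<bar> * (Lg * M * \<bar>t - s0\<bar>)"
  proof (cases t s0 rule: linorder_cases)
    case less
    obtain z where z: "t < z" "z < s0" "\<phi> (u s0) - \<phi> (u t) = (s0 - t) * D (u z) (V (u z))"
      using MVT2[OF less, of "\<lambda>\<sigma>. \<phi> (u \<sigma>)" "\<lambda>\<sigma>. D (u \<sigma>) (V (u \<sigma>))"] F less
      by (auto simp: closed_segment_eq_real_ivl)
    have zs: "z \<in> closed_segment s0 t" using z by (auto simp: closed_segment_eq_real_ivl)
    have e: "\<phi> (u t) = - ((s0 - t) * D (u z) (V (u z)))" using z z0 by simp
    have "\<bar>\<phi> (u t)\<bar> = \<bar>s0 - t\<bar> * \<bar>D (u z) (V (u z))\<bar>" unfolding e abs_minus_cancel abs_mult ..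
    also have "\<dots> \<le> \<bar>t - s0\<bar> * (Lg * M * \<bar>t - s0\<bar>)"
      using G[OF zs] by (simp add: abs_minus_commute mult_left_mono)
    finally show ?thesis .
  next
    case equal then show ?thesis using z0 by simp
  next
    case greater
    obtain z where z: "s0 < z" "z < t" "\<phi> (u t) - \<phi> (u s0) = (t - s0) * D (u z) (V (u z))"
      using MVT2[OF greater, of "\<lambda>\<sigma>. \<phi> (u \<sigma>)" "\<lambda>\<sigma>. D (u \<sigma>) (V (u \<sigma>))"] F greater
      by (auto simp: closed_segment_eq_real_ivl)
    have zs: "z \<in> closed_segment s0 t" using z by (auto simp: closed_segment_eq_real_ivl)
    have "\<bar>\<phi> (u t)\<bar> = \<bar>t - s0\<bar> * \<bar>D (u z) (V (u z))\<bar>" using z z0 by (simp add: abs_mult)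
    also have "\<dots> \<le> \<bar>t - s0\<bar> * (Lg * M * \<bar>t - s0\<bar>)"
      using G[OF zs] by (simp add: mult_left_mono)
    finally show ?thesis .
  qed
  also have "\<dots> = Lg * M * (t - s0)\<^sup>2" by (simp add: power2_eq_square abs_mult_self_eq)
  finally show ?thesis .
qed


lemma thin_compact:
  fixes \<phi> :: "'a::euclidean_space \<Rightarrow> real"
  assumes cont: "continuous_on (cball p r) \<phi>" and "r' \<le> r"
  shows "compact {x\<in>cball p r'. \<bar>\<phi> x\<bar> \<le> \<delta>}"
proof -
  have "continuous_on (cball p r') \<phi>"
    using cont subset_cball[OF assms(2)] continuous_on_subset by blast
  then have "closed (cball p r' \<inter> \<phi> -` {-\<delta>..\<delta>})"
    by (intro continuous_closed_preimage) auto
  moreover have "{x\<in>cball p r'. \<bar>\<phi> x\<bar> \<le> \<delta>} = cball p r' \<inter> \<phi> -` {-\<delta>..\<delta>}" by auto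
  ultimately have cl: "closed {x\<in>cball p r'. \<bar>\<phi> x\<bar> \<le> \<delta>}" by simp
  have "bounded {x\<in>cball p r'. \<bar>\<phi> x\<bar> \<le> \<delta>}" by (rule bounded_subset[OF bounded_cball]) auto
  then show ?thesis using cl compact_eq_bounded_closed by blast
qed

lemma aux_div:
  fixes a m r c \<delta> :: real
  assumes "(r * c / (12 * \<delta>)) * a \<le> m" "r > 0" "c > 0" "\<delta> > 0"
  shows "a \<le> (12 * m / (r * c)) * \<delta>"
proof -
  have "r * c * a \<le> 12 * \<delta> * m" using assms by (simp add: field_simps)
  then show ?thesis using assms by (simp add: field_simps)
qed

lemma thin_measure:
  fixes \<phi> :: "'a::euclidean_space \<Rightarrow> real"
  assumes der: "\<And>x. x \<in> cball p r \<Longrightarrow> (\<phi> has_derivative D x) (at x)"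
    and De: "\<And>x. x \<in> cball p r \<Longrightarrow> D x e \<ge> c"
    and c: "c > 0" and e: "norm e = 1" and r: "r > 0" and \<delta>: "\<delta> > 0" "\<delta> \<le> c * r / 12"
  shows "measure lebesgue {x\<in>cball p (r/2). \<bar>\<phi> x\<bar> \<le> \<delta>} \<le> (12 * measure lebesgue (cball p r) / (r * c)) * \<delta>"
proof -
  define A where "A = {x\<in>cball p (r/2). \<bar>\<phi> x\<bar> \<le> \<delta>}"
  have cont: "continuous_on (cball p r) \<phi>"
    using der has_derivative_continuous continuous_at_imp_continuous_on by blast
  have cA: "compact A" unfolding A_def by (rule thin_compact[OF cont]) (use r in auto)
  define h where "h = 3 * \<delta> / c"
  have h0: "h > 0" using \<delta> c by (simp add: h_def)
  define N where "N = nat \<lfloor>r / (2 * h)\<rfloor>"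
  have Nh: "real N * h \<le> r / 2"
  proof -
    have "real N \<le> r / (2 * h)" unfolding N_def using r h0
      by (metis floor_le_zero le_nat_floor less_eq_real_def nat_le_0 nat_less_as_int of_nat_0 of_nat_floor
          zero_le_divide_iff zero_le_mult_iff zero_le_numeral)
    then show ?thesis using h0 by (simp add: field_simps)
  qed
  have Nge: "real N \<ge> r * c / (12 * \<delta>)"
  proof -
    have "r / (2 * h) = r * c / (6 * \<delta>)" unfolding h_def using c \<delta> by (simp add: field_simps)
    moreover have "r * c / (12 * \<delta>) \<ge> 1" using \<delta> by (simp add: field_simps)
    moreover have "real N \<ge> r / (2 * h) - 1" unfolding N_def using r h0 by linarith
    ultimately show ?thesis by (simp add: field_simps)
  qed
  define B where "B k = (+) ((real k * h) *\<^sub>R e) ` A" for k :: nat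
  have cB: "compact (B k)" for k unfolding B_def by (rule compact_translation[OF cA])
  have mB: "measure lebesgue (B k) = measure lebesgue A" for k
    unfolding B_def by (rule measure_translation)
  have Bsub: "B k \<subseteq> cball p r" if "k < N" for k
  proof
    fix y assume "y \<in> B k"
    then obtain x where x: "x \<in> A" "y = (real k * h) *\<^sub>R e + x" unfolding B_def by auto
    have "dist p y \<le> dist p x + dist x y" by (rule dist_triangle)
    also have "dist x y = real k * h" using x e h0 by (simp add: dist_norm)
    also have "dist p x + real k * h \<le> r/2 + r/2"
    proof (rule add_mono)
      show "dist p x \<le> r/2" using x unfolding A_def by auto
      have "real k * h \<le> real N * h" using that h0 by (simp add: mult_right_mono)
      then show "real k * h \<le> r/2" using Nh by linarith
    qed
    finally show "y \<in> cball p r" by simp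
  qed
  have key: False if "x \<in> A" "y \<in> A" "x + (real j * h) *\<^sub>R e = y + (real k * h) *\<^sub>R e" "j < k" "k < N" for x y j k
  proof -
    define s where "s = real (k - j) * h"
    have s0: "0 \<le> s" using h0 by (simp add: s_def)
    have sh: "s \<ge> h" using that h0 by (simp add: s_def)
    have xs: "x = y + s *\<^sub>R e"
    proof -
      have "x = y + (real k * h) *\<^sub>R e - (real j * h) *\<^sub>R e" using that(3) by (simp add: algebra_simps)
      also have "\<dots> = y + s *\<^sub>R e" using that(4) by (simp add: s_def of_nat_diff algebra_simps)
      finally show ?thesis .
    qed
    have Asub: "A \<subseteq> cball p r" unfolding A_def using r by auto
    have "\<phi> (y + s *\<^sub>R e) - \<phi> y \<ge> c * s"
      by (rule line_mono[OF der De convex_cball]) (use that xs Asub s0 in auto)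
    moreover have "c * s \<ge> c * h" using sh c by (simp add: mult_left_mono)
    moreover have "c * h = 3 * \<delta>" using c by (simp add: h_def)
    moreover have "\<bar>\<phi> x\<bar> \<le> \<delta>" "\<bar>\<phi> y\<bar> \<le> \<delta>" using that unfolding A_def by auto
    ultimately show False using xs \<delta> by auto
  qed
  have disj: "disjoint_family_on B {..<N}"
    unfolding disjoint_family_on_def
  proof (intro ballI impI)
    fix j k assume jk: "j \<in> {..<N}" "k \<in> {..<N}" "j \<noteq> k"
    show "B j \<inter> B k = {}"
    proof (rule ccontr)
      assume "B j \<inter> B k \<noteq> {}"
      then obtain x y where xy: "x \<in> A" "y \<in> A" "(real j * h) *\<^sub>R e + x = (real k * h) *\<^sub>R e + y"
        unfolding B_def by auto
      show False
      proof (cases "j < k")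
        case True then show False using key[OF xy(1,2) _ True] xy jk by (auto simp: add.commute)
      next
        case False then have "k < j" using jk by simp
        then show False using key[OF xy(2,1) _ \<open>k < j\<close>] xy jk by (auto simp: add.commute)
      qed
    qed
  qed
  have "measure lebesgue (\<Union>k\<in>{..<N}. B k) = (\<Sum>k\<in>{..<N}. measure lebesgue (B k))"
  proof (rule measure_finite_Union[OF _ _ disj])
    have Bl: "B k \<in> lmeasurable" for k using lmeasurable_compact[OF cB] .
    show "B ` {..<N} \<subseteq> sets lebesgue" using Bl by (auto intro: fmeasurableD)
    show "emeasure lebesgue (B k) \<noteq> \<infinity>" for k using fmeasurableD2[OF Bl] by simp
  qed simp
  also have "\<dots> = real N * measure lebesgue A" by (simp add: mB)
  finally have eqN: "measure lebesgue (\<Union>k\<in>{..<N}. B k) = real N * measure lebesgue A" .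
  have "measure lebesgue (\<Union>k\<in>{..<N}. B k) \<le> measure lebesgue (cball p r)"
    by (rule measure_mono_fmeasurable) (use Bsub lmeasurable_compact[OF cB] in auto)
  then have le: "real N * measure lebesgue A \<le> measure lebesgue (cball p r)" unfolding eqN .
  have mA0: "0 \<le> measure lebesgue A" by (rule measure_nonneg)
  have "(r * c / (12 * \<delta>)) * measure lebesgue A \<le> real N * measure lebesgue A"
    by (rule mult_right_mono[OF Nge mA0])
  then have "(r * c / (12 * \<delta>)) * measure lebesgue A \<le> measure lebesgue (cball p r)" using le by linarith
  then have "measure lebesgue A \<le> (12 * measure lebesgue (cball p r) / (r * c)) * \<delta>"
    by (rule aux_div[OF _ r c \<delta>(1)])
  then show ?thesis unfolding A_def .
qed


lemma lin_expand:
  fixes L :: "'a::euclidean_space \<Rightarrow> real"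
  assumes "linear L"
  shows "L v = (\<Sum>b\<in>Basis. (v \<bullet> b) * L b)"
proof -
  have "L v = L (\<Sum>b\<in>Basis. (v \<bullet> b) *\<^sub>R b)" by (simp add: euclidean_representation)
  also have "\<dots> = (\<Sum>b\<in>Basis. (v \<bullet> b) * L b)"
    using assms by (simp add: linear_sum linear_scale)
  finally show ?thesis .
qed

lemma normal_kernel:
  fixes L :: "'a::euclidean_space \<Rightarrow> real"
  assumes lin: "linear L" and nz: "L \<noteq> (\<lambda>_. 0)" and n1: "norm n = 1"
    and ker: "\<And>v. L v = 0 \<Longrightarrow> n \<bullet> v = 0" and tv: "V \<bullet> n = 0"
  shows "L V = 0"
proof -
  define w where "w = (\<Sum>b\<in>Basis. L b *\<^sub>R b)"
  have Lw: "L v = w \<bullet> v" for v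
    unfolding w_def lin_expand[OF lin, of v] by (simp add: inner_sum_left inner_sum_right inner_commute mult.commute)
  have w0: "w \<noteq> 0"
  proof
    assume "w = 0" then have "L = (\<lambda>_. 0)" using Lw by (auto simp: fun_eq_iff)
    then show False using nz by simp
  qed
  then have ww: "w \<bullet> w > 0" by simp
  define \<mu> where "\<mu> = (n \<bullet> w) / (w \<bullet> w)"
  define v where "v = n - \<mu> *\<^sub>R w"
  have Lv: "L v = 0" unfolding Lw v_def \<mu>_def using ww by (simp add: inner_diff_right inner_commute)
  have nv: "n \<bullet> v = 0" using ker[OF Lv] .
  have "v \<bullet> v = n \<bullet> v - \<mu> * (w \<bullet> v)" unfolding v_def by (simp add: inner_diff_left inner_commute)
  also have "\<dots> = 0" using nv Lv Lw by simp
  finally have "v = 0" by simp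
  then have nw: "n = \<mu> *\<^sub>R w" unfolding v_def by simp
  have "\<mu> \<noteq> 0" using n1 nw by auto
  moreover have "\<mu> * (V \<bullet> w) = 0" using tv nw by (simp add: inner_commute)
  ultimately have "w \<bullet> V = 0" by (simp add: inner_commute)
  then show ?thesis using Lw by simp
qed

lemma lip_mult:
  fixes f g :: "'a \<Rightarrow> real"
  assumes "\<bar>f x - f y\<bar> \<le> Lf * d" "\<bar>g x - g y\<bar> \<le> Lg * d" "\<bar>f x\<bar> \<le> A" "\<bar>g y\<bar> \<le> B"
    and "0 \<le> Lf" "0 \<le> Lg" "0 \<le> d"
  shows "\<bar>f x * g x - f y * g y\<bar> \<le> (Lf * B + A * Lg) * d"
proof -
  have "f x * g x - f y * g y = f x * (g x - g y) + (f x - f y) * g y" by (simp add: algebra_simps)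
  then have "\<bar>f x * g x - f y * g y\<bar> \<le> \<bar>f x\<bar> * \<bar>g x - g y\<bar> + \<bar>f x - f y\<bar> * \<bar>g y\<bar>"
    by (simp add: abs_mult[symmetric] abs_triangle_ineq)
  also have "\<dots> \<le> A * (Lg * d) + (Lf * d) * B"
    using assms by (intro add_mono mult_mono) auto
  finally show ?thesis by (simp add: algebra_simps)
qed

lemma bounded_on_compact_abs:
  fixes f :: "'a::metric_space \<Rightarrow> real"
  assumes "continuous_on K f" "compact K"
  shows "\<exists>B. \<forall>x\<in>K. \<bar>f x\<bar> \<le> B"
proof -
  have "bounded (f ` K)" using assms compact_continuous_image compact_imp_bounded by blast
  then show ?thesis unfolding bounded_iff by auto
qed

lemma local_chart:
  fixes \<Gamma> :: "'a::euclidean_space set" and n V :: "'a \<Rightarrow> 'a" and \<phi> :: "'a \<Rightarrow> real"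
  assumes loc: "local_C3_defining_fun \<Gamma> p U \<phi>" and normal: "unit_normal_field \<Gamma> n"
    and tangent: "\<And>q. q \<in> \<Gamma> \<Longrightarrow> V q \<bullet> n q = 0"
    and Vd: "V differentiable_on UNIV"
    and Vc: "\<And>b. b \<in> Basis \<Longrightarrow> continuous_on UNIV (\<lambda>x. frechet_derivative V (at x) b)"
    and p\<Gamma>: "p \<in> \<Gamma>"
  shows "\<exists>e c r Lg. norm e = 1 \<and> c > 0 \<and> r > 0 \<and> Lg \<ge> 0 \<and> cball p r \<subseteq> U \<and>
    (\<forall>x\<in>cball p r. (\<phi> has_derivative frechet_derivative \<phi> (at x)) (at x)) \<and>
    (\<forall>x\<in>cball p r. frechet_derivative \<phi> (at x) e \<ge> c) \<and>
    (\<forall>x\<in>cball p r. \<forall>y\<in>cball p r. \<bar>frechet_derivative \<phi> (at x) (V x) - frechet_derivative \<phi> (at y) (V y)\<bar> \<le> Lg * norm (x - y)) \<and>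
    (\<forall>x\<in>cball p r. x \<in> \<Gamma> \<longleftrightarrow> \<phi> x = 0) \<and>
    (\<forall>z\<in>cball p r \<inter> \<Gamma>. frechet_derivative \<phi> (at z) (V z) = 0)"
proof -
  have oU: "open U" and pU: "p \<in> U" and C3: "Ck_on (Suc 2) U \<phi>"
    and zs: "\<And>x. x \<in> U \<Longrightarrow> x \<in> \<Gamma> \<longleftrightarrow> \<phi> x = 0"
    and nd: "\<And>x. x \<in> U \<Longrightarrow> x \<in> \<Gamma> \<Longrightarrow> frechet_derivative \<phi> (at x) \<noteq> (\<lambda>_. 0)"
    using loc unfolding local_C3_defining_fun_def by (auto simp: numeral_3_eq_3)
  define D where "D x = frechet_derivative \<phi> (at x)" for x
  have der: "\<And>x. x \<in> U \<Longrightarrow> (\<phi> has_derivative D x) (at x)"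
    unfolding D_def using Ck_Suc_D(2)[OF C3 oU] .
  have Pd: "\<And>b. b \<in> Basis \<Longrightarrow> Ck_on (Suc (Suc 0)) U (\<lambda>x. D x b)"
    unfolding D_def using Ck_Suc_D(3)[OF C3 oU] unfolding numeral_2_eq_2 .
  have Pdiff: "\<And>b. b \<in> Basis \<Longrightarrow> (\<lambda>x. D x b) differentiable_on U"
    using Ck_Suc_D(1)[OF Pd oU] .
  have Pc2: "\<And>b b'. b \<in> Basis \<Longrightarrow> b' \<in> Basis \<Longrightarrow>
      continuous_on U (\<lambda>x. frechet_derivative (\<lambda>x. D x b) (at x) b')"
    using Ck_Suc_D(4)[OF Pd oU] by blast
  have Pcont: "\<And>b. b \<in> Basis \<Longrightarrow> continuous_on U (\<lambda>x. D x b)"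
    unfolding D_def using Ck_Suc_D(4)[OF C3 oU] .
  have lin: "\<And>x. x \<in> U \<Longrightarrow> linear (D x)" using der has_derivative_linear by blast
  have Dexp: "\<And>x v. x \<in> U \<Longrightarrow> D x v = (\<Sum>b\<in>Basis. (v \<bullet> b) * D x b)"
    using lin lin_expand by blast
  obtain v where v: "D p v \<noteq> 0" using nd[OF pU p\<Gamma>] unfolding D_def by (auto simp: fun_eq_iff)
  have v0: "v \<noteq> 0" using v lin[OF pU] linear_0 by force
  define e where "e = (sgn (D p v) / norm v) *\<^sub>R v"
  have e1: "norm e = 1" using v v0 by (simp add: e_def abs_sgn)
  have Dpe: "D p e = \<bar>D p v\<bar> / norm v"
  proof -
    have "sgn (D p v) * D p v = \<bar>D p v\<bar>" by (auto simp: sgn_if)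
    then show ?thesis using lin[OF pU] by (simp add: e_def linear_scale)
  qed
  have Dpe0: "D p e > 0" using Dpe v v0 by simp
  define c where "c = D p e / 2"
  have c0: "c > 0" using Dpe0 by (simp add: c_def)
  have ce: "continuous_on U (\<lambda>x. D x e)"
  proof -
    have "continuous_on U (\<lambda>x. \<Sum>b\<in>Basis. (e \<bullet> b) * D x b)"
      by (intro continuous_intros Pcont)
    then show ?thesis by (rule continuous_on_cong[THEN iffD1, rotated 2]) (auto simp: Dexp)
  qed
  obtain r1 where r1: "r1 > 0" "\<And>x. x \<in> U \<Longrightarrow> dist x p < r1 \<Longrightarrow> dist (D x e) (D p e) < c"
    using ce pU c0 unfolding continuous_on_iff by blast
  obtain r2 where r2: "r2 > 0" "ball p r2 \<subseteq> U" using oU pU open_contains_ball by blast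
  define r where "r = min r1 r2 / 2"
  have r0: "r > 0" using r1 r2 by (simp add: r_def)
  have KU: "cball p r \<subseteq> U"
  proof
    fix x assume "x \<in> cball p r"
    then have "dist p x < r2" using r1 r2 by (simp add: r_def)
    then show "x \<in> U" using r2 by auto
  qed
  have De: "D x e \<ge> c" if "x \<in> cball p r" for x
  proof -
    have "dist x p < r1" using that r1 r2 by (simp add: r_def dist_commute)
    then have "\<bar>D x e - D p e\<bar> < c" using r1(2) KU that by (auto simp: dist_real_def)
    moreover have "- (D x e - D p e) \<le> \<bar>D x e - D p e\<bar>" by (rule abs_ge_minus_self)
    ultimately show ?thesis unfolding c_def by linarith
  qed
  define K where "K = cball p r"
  have K: "compact K" "convex K" "K \<subseteq> U" "p \<in> K" using KU r0 by (auto simp: K_def)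
  have "\<forall>b\<in>Basis. \<exists>L\<ge>0. \<forall>x\<in>K. \<forall>y\<in>K. norm (D x b - D y b) \<le> L * norm (x - y)"
    using C1_lipschitz_on[OF oU Pdiff Pc2 K(1,2,3)] by blast
  then obtain LP where LP: "\<And>b. b \<in> Basis \<Longrightarrow> LP b \<ge> 0"
    "\<And>b x y. b \<in> Basis \<Longrightarrow> x \<in> K \<Longrightarrow> y \<in> K \<Longrightarrow> \<bar>D x b - D y b\<bar> \<le> LP b * norm (x - y)"
    by (metis real_norm_def)
  obtain LV where LV: "LV \<ge> 0" "\<And>x y. x \<in> K \<Longrightarrow> y \<in> K \<Longrightarrow> norm (V x - V y) \<le> LV * norm (x - y)"
    using C1_lipschitz_on[OF open_UNIV Vd Vc K(1,2)] by blast
  have "continuous_on K (\<lambda>x. \<Sum>b\<in>Basis. \<bar>D x b\<bar>)"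
    using K(3) by (intro continuous_intros continuous_on_subset[OF Pcont]) auto
  then obtain BP where BP0: "\<And>x. x \<in> K \<Longrightarrow> \<bar>\<Sum>b\<in>Basis. \<bar>D x b\<bar>\<bar> \<le> BP"
    using bounded_on_compact_abs[OF _ K(1)] by blast
  have BP: "\<bar>D x b\<bar> \<le> BP" if "x \<in> K" "b \<in> Basis" for x b
  proof -
    have "\<bar>D x b\<bar> \<le> (\<Sum>b\<in>Basis. \<bar>D x b\<bar>)" by (rule member_le_sum) (auto simp: that)
    then show ?thesis using BP0[OF that(1)] by linarith
  qed
  have BPnn: "BP \<ge> 0" using BP[OF K(4) SOME_Basis] by linarith
  have "continuous_on K (\<lambda>x. norm (V x))"
    using Vd by (intro continuous_intros) (auto intro: differentiable_imp_continuous_on continuous_on_subset)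
  then obtain BV where BV0: "\<And>x. x \<in> K \<Longrightarrow> \<bar>norm (V x)\<bar> \<le> BV"
    using bounded_on_compact_abs[OF _ K(1)] by blast
  have BV: "\<bar>V x \<bullet> b\<bar> \<le> BV" if "x \<in> K" "b \<in> Basis" for x b
    using BV0[OF that(1)] Basis_le_norm[OF that(2), of "V x"] by simp
  have BVnn: "BV \<ge> 0" using BV0[OF K(4)] by linarith
  define Lg where "Lg = (\<Sum>b\<in>Basis. LV * BP + BV * LP b)"
  have Lg0: "Lg \<ge> 0" unfolding Lg_def using LV BPnn BVnn LP by (intro sum_nonneg) auto
  have glip: "\<bar>D x (V x) - D y (V y)\<bar> \<le> Lg * norm (x - y)" if "x \<in> K" "y \<in> K" for x y
  proof -
    have "D x (V x) - D y (V y) = (\<Sum>b\<in>Basis. (V x \<bullet> b) * D x b - (V y \<bullet> b) * D y b)"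
      using Dexp K(3) that by (simp add: sum_subtractf subsetD)
    then have "\<bar>D x (V x) - D y (V y)\<bar> \<le> (\<Sum>b\<in>Basis. \<bar>(V x \<bullet> b) * D x b - (V y \<bullet> b) * D y b\<bar>)"
      by (simp add: sum_abs)
    also have "\<dots> \<le> (\<Sum>b\<in>Basis. (LV * BP + BV * LP b) * norm (x - y))"
    proof (rule sum_mono)
      fix b :: 'a assume b: "b \<in> Basis"
      have l1: "\<bar>V x \<bullet> b - V y \<bullet> b\<bar> \<le> LV * norm (x - y)"
      proof -
        have "\<bar>V x \<bullet> b - V y \<bullet> b\<bar> = \<bar>(V x - V y) \<bullet> b\<bar>" by (simp add: inner_diff_left)
        also have "\<dots> \<le> norm (V x - V y)" by (rule Basis_le_norm[OF b])
        also have "\<dots> \<le> LV * norm (x - y)" using LV(2) that by blast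
        finally show ?thesis .
      qed
      show "\<bar>(V x \<bullet> b) * D x b - (V y \<bullet> b) * D y b\<bar> \<le> (LV * BP + BV * LP b) * norm (x - y)"
        by (rule lip_mult[where f="\<lambda>x. V x \<bullet> b" and g="\<lambda>x. D x b", OF l1 LP(2)[OF b that] BV[OF that(1) b] BP[OF that(2) b] LV(1) LP(1)[OF b] norm_ge_zero])
    qed
    also have "\<dots> = Lg * norm (x - y)" by (simp add: Lg_def sum_distrib_right)
    finally show ?thesis .
  qed
  have gz: "D z (V z) = 0" if "z \<in> K" "z \<in> \<Gamma>" for z
  proof -
    have zU: "z \<in> U" using that K(3) by blast
    have locz: "local_C3_defining_fun \<Gamma> z U \<phi>" using loc zU unfolding local_C3_defining_fun_def by blast
    have n1: "norm (n z) = 1" and ker: "\<And>v. D z v = 0 \<Longrightarrow> n z \<bullet> v = 0"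
      using normal that(2) locz unfolding unit_normal_field_def D_def by blast+
    show ?thesis
      by (rule normal_kernel[OF lin[OF zU] _ n1 ker tangent[OF that(2)]])
         (use nd[OF zU that(2)] in \<open>simp add: D_def\<close>)
  qed
  show ?thesis
    apply (rule exI[of _ e], rule exI[of _ c], rule exI[of _ r], rule exI[of _ Lg])
    using e1 c0 r0 Lg0 KU der De glip zs gz unfolding K_def D_def[symmetric] by blast
qed


lemma curve_cross:
  fixes u :: "real \<Rightarrow> 'a::real_normed_vector"
  assumes cu: "continuous_on UNIV u" and fr: "frontier \<Omega> \<subseteq> \<Gamma>"
    and a: "u a \<in> \<Omega>" and b: "u b \<notin> \<Omega>"
  shows "\<exists>s0\<in>closed_segment a b. u s0 \<in> \<Gamma>"
proof -
  have "connected (u ` closed_segment a b)"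
    by (rule connected_continuous_image[OF continuous_on_subset[OF cu] connected_segment]) auto
  moreover have "u ` closed_segment a b \<inter> \<Omega> \<noteq> {}" using a by auto
  moreover have "u ` closed_segment a b - \<Omega> \<noteq> {}" using b by auto
  ultimately have "u ` closed_segment a b \<inter> frontier \<Omega> \<noteq> {}" by (rule connected_Int_frontier)
  then show ?thesis using fr by auto
qed

lemma seg_diff_le: "(\<sigma>::real) \<in> closed_segment s0 s \<Longrightarrow> \<bar>\<sigma> - s0\<bar> \<le> \<bar>s - s0\<bar>"
  by (auto simp: closed_segment_eq_real_ivl split: if_splits)

theorem lemma4p1:
  fixes \<Gamma> :: "'a::euclidean_space set"
    and n V :: "'a \<Rightarrow> 'a"
    and T :: "real \<Rightarrow> 'a \<Rightarrow> 'a"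
  assumes dim: "DIM('a) \<ge> 2"
    and hyp: "C3_closed_hypersurface \<Gamma>"
    and normal: "unit_normal_field \<Gamma> n"
    and V_C2: "Ck_on 2 UNIV V"
    and V_supp: "bounded {x. V x \<noteq> 0}"
    and flow0: "\<And>X. T 0 X = X"
    and flow: "\<And>X t. ((\<lambda>s. T s X) has_vector_derivative V (T t X)) (at t)"
    and tangent: "\<And>p. p \<in> \<Gamma> \<Longrightarrow> V p \<bullet> n p = 0"
  shows "\<exists>t0>0. \<exists>C>0.
           (\<forall>X\<in>\<Gamma>. \<forall>t. \<bar>t\<bar> \<le> t0 \<longrightarrow> infdist (T t X) \<Gamma> \<le> C * t\<^sup>2) \<and>
           (\<forall>t. \<bar>t\<bar> \<le> t0 \<longrightarrow>
              emeasure lebesgue {x. indicator (T t ` inside \<Gamma>) x \<noteq> (indicator (inside \<Gamma>) x :: real)}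
                \<le> ennreal (C * t\<^sup>2)) \<and>
           (\<forall>t. \<bar>t\<bar> \<le> t0 \<longrightarrow>
              emeasure lebesgue {x. indicator (T t ` outside \<Gamma>) x \<noteq> (indicator (outside \<Gamma>) x :: real)}
                \<le> ennreal (C * t\<^sup>2))"
proof -
  have V2: "Ck_on (Suc 1) UNIV V" using V_C2 by (simp add: numeral_2_eq_2)
  have Vd: "V differentiable_on UNIV" using Ck_Suc_D(1)[OF V2 open_UNIV] .
  have Vc: "\<And>b. b \<in> Basis \<Longrightarrow> continuous_on UNIV (\<lambda>x. frechet_derivative V (at x) b)"
    using Ck_Suc_D(4)[OF V2 open_UNIV] .
  have lipV: "\<And>K. compact K \<Longrightarrow> convex K \<Longrightarrow> \<exists>L\<ge>0. \<forall>x\<in>K. \<forall>y\<in>K. norm (V x - V y) \<le> L * norm (x - y)"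
    using C1_lipschitz_on[OF open_UNIV Vd Vc] by blast
  have contV: "continuous_on UNIV V" using Vd differentiable_imp_continuous_on by blast
  obtain R0 x0 where R0: "{x. V x \<noteq> 0} \<subseteq> cball x0 R0"
    using V_supp unfolding bounded_subset_cball by blast
  have "continuous_on (cball x0 R0) (\<lambda>x. norm (V x))"
    using continuous_on_subset[OF contV subset_UNIV] by (intro continuous_intros)
  then obtain M0 where M0: "\<And>x. x \<in> cball x0 R0 \<Longrightarrow> \<bar>norm (V x)\<bar> \<le> M0"
    using bounded_on_compact_abs[OF _ compact_cball] by blast
  define M where "M = max M0 1"
  have M1: "M > 0" by (simp add: M_def)
  have MV: "\<And>x. norm (V x) \<le> M"
  proof -
    fix x show "norm (V x) \<le> M"
    proof (cases "x \<in> cball x0 R0")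
      case True then show ?thesis using M0[OF True] by (simp add: M_def)
    next
      case False then have "V x = 0" using R0 by blast
      then show ?thesis using M1 by simp
    qed
  qed
  have group: "\<And>t s X. T t (T s X) = T (t + s) X"
    by (rule flow_group[OF flow flow0 MV lipV])
  have contT: "\<And>X. continuous_on UNIV (\<lambda>s. T s X)"
    by (intro continuous_at_imp_continuous_on ballI has_vector_derivative_continuous[OF flow])
  have cpt: "compact \<Gamma>" and ne: "\<Gamma> \<noteq> {}" and ldf: "\<And>p. p \<in> \<Gamma> \<Longrightarrow> \<exists>U \<phi>. local_C3_defining_fun \<Gamma> p U \<phi>"
    using hyp unfolding C3_closed_hypersurface_def by auto
  define Q where "Q p \<phi> e c r Lg \<longleftrightarrow> norm e = 1 \<and> c > 0 \<and> r > 0 \<and> Lg \<ge> 0 \<and>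
    (\<forall>x\<in>cball p r. (\<phi> has_derivative frechet_derivative \<phi> (at x)) (at x)) \<and>
    (\<forall>x\<in>cball p r. frechet_derivative \<phi> (at x) e \<ge> c) \<and>
    (\<forall>x\<in>cball p r. \<forall>y\<in>cball p r. \<bar>frechet_derivative \<phi> (at x) (V x) - frechet_derivative \<phi> (at y) (V y)\<bar> \<le> Lg * norm (x - y)) \<and>
    (\<forall>x\<in>cball p r. x \<in> \<Gamma> \<longleftrightarrow> \<phi> x = 0) \<and>
    (\<forall>z\<in>cball p r \<inter> \<Gamma>. frechet_derivative \<phi> (at z) (V z) = 0)"
    for p :: 'a and \<phi> :: "'a \<Rightarrow> real" and e :: 'a and c r Lg :: real
  have ex: "\<forall>p\<in>\<Gamma>. \<exists>\<phi> e c r Lg. Q p \<phi> e c r Lg"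
  proof
    fix p assume p: "p \<in> \<Gamma>"
    obtain U \<phi> where loc: "local_C3_defining_fun \<Gamma> p U \<phi>" using ldf[OF p] by blast
    show "\<exists>\<phi> e c r Lg. Q p \<phi> e c r Lg"
      using local_chart[OF loc normal tangent Vd Vc p] unfolding Q_def by blast
  qed
  from bchoice[OF ex] obtain \<Phi> where "\<forall>p\<in>\<Gamma>. \<exists>e c r Lg. Q p (\<Phi> p) e c r Lg" by (elim exE)
  from bchoice[OF this] obtain E where "\<forall>p\<in>\<Gamma>. \<exists>c r Lg. Q p (\<Phi> p) (E p) c r Lg" by (elim exE)
  from bchoice[OF this] obtain Cc where "\<forall>p\<in>\<Gamma>. \<exists>r Lg. Q p (\<Phi> p) (E p) (Cc p) r Lg" by (elim exE)
  from bchoice[OF this] obtain R where "\<forall>p\<in>\<Gamma>. \<exists>Lg. Q p (\<Phi> p) (E p) (Cc p) (R p) Lg" by (elim exE)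
  from bchoice[OF this] obtain LG where QQ': "\<forall>p\<in>\<Gamma>. Q p (\<Phi> p) (E p) (Cc p) (R p) (LG p)" by (elim exE)
  have QQ: "\<And>p. p \<in> \<Gamma> \<Longrightarrow> Q p (\<Phi> p) (E p) (Cc p) (R p) (LG p)" using QQ' by blast
  have Rpos: "\<And>p. p \<in> \<Gamma> \<Longrightarrow> R p > 0" using QQ unfolding Q_def by blast
  obtain P where P: "P \<subseteq> \<Gamma>" "finite P" "\<Gamma> \<subseteq> (\<Union>p\<in>P. ball p (R p / 4))"
  proof (rule compactE_image[OF cpt, of \<Gamma> "\<lambda>p. ball p (R p / 4)"])
    show "\<Gamma> \<subseteq> (\<Union>p\<in>\<Gamma>. ball p (R p / 4))"
    proof
      fix x assume "x \<in> \<Gamma>" then show "x \<in> (\<Union>p\<in>\<Gamma>. ball p (R p / 4))"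
        using Rpos[of x] by (intro UN_I[of x]) auto
    qed
  qed auto
  have Pne: "P \<noteq> {}" using P ne by blast
  have PG: "\<And>p. p \<in> P \<Longrightarrow> p \<in> \<Gamma>" using P(1) by blast
  have derp: "\<And>p x. p \<in> \<Gamma> \<Longrightarrow> x \<in> cball p (R p) \<Longrightarrow> (\<Phi> p has_derivative frechet_derivative (\<Phi> p) (at x)) (at x)"
    using QQ unfolding Q_def by blast
  have Dep: "\<And>p x. p \<in> \<Gamma> \<Longrightarrow> x \<in> cball p (R p) \<Longrightarrow> frechet_derivative (\<Phi> p) (at x) (E p) \<ge> Cc p"
    using QQ unfolding Q_def by blast
  have glipp: "\<And>p x y. p \<in> \<Gamma> \<Longrightarrow> x \<in> cball p (R p) \<Longrightarrow> y \<in> cball p (R p) \<Longrightarrow>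
      \<bar>frechet_derivative (\<Phi> p) (at x) (V x) - frechet_derivative (\<Phi> p) (at y) (V y)\<bar> \<le> LG p * norm (x - y)"
    using QQ unfolding Q_def by blast
  have zsp: "\<And>p x. p \<in> \<Gamma> \<Longrightarrow> x \<in> cball p (R p) \<Longrightarrow> x \<in> \<Gamma> \<longleftrightarrow> \<Phi> p x = 0"
    using QQ unfolding Q_def by blast
  have gzp: "\<And>p z. p \<in> \<Gamma> \<Longrightarrow> z \<in> cball p (R p) \<Longrightarrow> z \<in> \<Gamma> \<Longrightarrow> frechet_derivative (\<Phi> p) (at z) (V z) = 0"
    using QQ unfolding Q_def by blast
  have e1p: "\<And>p. p \<in> \<Gamma> \<Longrightarrow> norm (E p) = 1" using QQ unfolding Q_def by blast
  have c0p: "\<And>p. p \<in> \<Gamma> \<Longrightarrow> Cc p > 0" using QQ unfolding Q_def by blast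
  have LG0p: "\<And>p. p \<in> \<Gamma> \<Longrightarrow> LG p \<ge> 0" using QQ unfolding Q_def by blast
  define rmin where "rmin = Min (R ` P)"
  define cmin where "cmin = Min (Cc ` P)"
  define Lmax where "Lmax = Max (LG ` P)"
  have rmin: "rmin > 0" "\<And>p. p \<in> P \<Longrightarrow> rmin \<le> R p"
    using P(2) Pne Rpos PG by (auto simp: rmin_def)
  have cmin: "cmin > 0" "\<And>p. p \<in> P \<Longrightarrow> cmin \<le> Cc p"
    using P(2) Pne c0p PG by (auto simp: cmin_def)
  have Lmax: "\<And>p. p \<in> P \<Longrightarrow> LG p \<le> Lmax" using P(2) by (auto simp: Lmax_def)
  have Lmax0: "Lmax \<ge> 0" using Lmax LG0p PG Pne by (meson all_not_in_conv order_trans)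
  define Kq where "Kq = Lmax * M + 1"
  have Kq0: "Kq > 0" using Lmax0 M1 unfolding Kq_def by (simp add: add_nonneg_pos)
  have KqL: "LG p * M \<le> Kq" if "p \<in> P" for p
  proof -
    have "LG p * M \<le> Lmax * M" using Lmax[OF that] M1 by (simp add: mult_right_mono)
    then show ?thesis by (simp add: Kq_def)
  qed
  define t0 where "t0 = min 1 (min (rmin / (8 * M)) (cmin * rmin / (48 * Kq)))"
  have t0: "t0 > 0" "t0 \<le> 1" "t0 \<le> rmin / (8 * M)" "t0 \<le> cmin * rmin / (48 * Kq)"
    using rmin cmin M1 Kq0 by (auto simp: t0_def)
  have crp: "cmin * rmin \<le> Cc p * R p" if "p \<in> P" for p
    using rmin cmin that by (intro mult_mono) (auto intro: less_imp_le order_trans[OF less_imp_le[OF cmin(1)]])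
  define Km where "Km p = 12 * measure lebesgue (cball p (R p)) / (R p * Cc p)" for p
  have Km0: "Km p \<ge> 0" if "p \<in> P" for p
  proof -
    have "R p * Cc p > 0" using Rpos c0p PG that by simp
    then show ?thesis unfolding Km_def using measure_nonneg[of lebesgue "cball p (R p)"]
      by (intro divide_nonneg_pos) auto
  qed
  define C where "C = Kq / cmin + 4 * Kq * (\<Sum>p\<in>P. Km p) + 1"
  have SKm: "(\<Sum>p\<in>P. Km p) \<ge> 0" using Km0 by (simp add: sum_nonneg)
  have C0: "C > 0" using Kq0 cmin SKm by (simp add: C_def add_pos_nonneg)
  have tsq: "Kq * t\<^sup>2 \<le> Kq * t0" if "\<bar>t\<bar> \<le> t0" for t
  proof -
    have "t\<^sup>2 \<le> t0\<^sup>2" using that by (simp add: abs_le_square_iff[symmetric] abs_of_pos[OF t0(1)])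
    also have "\<dots> \<le> t0" using t0 by (simp add: power2_eq_square mult_left_le)
    finally show ?thesis using Kq0 by simp
  qed
  have near: "\<exists>p\<in>P. T s y \<in> cball p (R p / 2) \<and> \<bar>\<Phi> p (T s y)\<bar> \<le> Kq * (s - s0)\<^sup>2"
    if zG: "T s0 y \<in> \<Gamma>" and ss: "\<bar>s - s0\<bar> \<le> 2 * t0" for y s0 s
  proof -
    obtain p where p: "p \<in> P" "T s0 y \<in> ball p (R p / 4)" using P(3) zG by blast
    have pG: "p \<in> \<Gamma>" using PG[OF p(1)] .
    have inS: "T \<sigma> y \<in> cball p (R p / 2)" if "\<sigma> \<in> closed_segment s0 s" for \<sigma>
    proof -
      have "norm (T \<sigma> y - T s0 y) \<le> M * \<bar>\<sigma> - s0\<bar>" by (rule flow_lip[OF flow MV])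
      also have "\<dots> \<le> M * (2 * t0)"
        using seg_diff_le[OF that] ss M1 by (intro mult_left_mono) auto
      also have "\<dots> \<le> M * (2 * (rmin / (8 * M)))" using t0 M1 by (intro mult_left_mono) auto
      also have "\<dots> = rmin / 4" using M1 by simp
      also have "\<dots> \<le> R p / 4" using rmin(2)[OF p(1)] by simp
      finally have "dist (T s0 y) (T \<sigma> y) \<le> R p / 4" by (simp add: dist_norm norm_minus_commute)
      moreover have "dist p (T s0 y) < R p / 4" using p(2) by simp
      ultimately have "dist p (T \<sigma> y) \<le> R p / 4 + R p / 4" using dist_triangle[of p "T \<sigma> y" "T s0 y"] by linarith
      then show ?thesis by simp
    qed
    have sub: "cball p (R p / 2) \<subseteq> cball p (R p)" using Rpos[OF pG] by (intro subset_cball) simp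
    have s0in: "T s0 y \<in> cball p (R p)" using inS[of s0] sub by auto
    have "\<bar>\<Phi> p (T s y)\<bar> \<le> LG p * M * (s - s0)\<^sup>2"
    proof (rule sq_bound[where S="cball p (R p)" and D="\<lambda>x. frechet_derivative (\<Phi> p) (at x)" and V=V])
      show "\<And>x. x \<in> cball p (R p) \<Longrightarrow> (\<Phi> p has_derivative frechet_derivative (\<Phi> p) (at x)) (at x)"
        using derp[OF pG] .
      show "\<And>t. ((\<lambda>\<sigma>. T \<sigma> y) has_vector_derivative V (T t y)) (at t)" using flow .
      show "\<And>x. norm (V x) \<le> M" using MV .
      show "\<And>x z. x \<in> cball p (R p) \<Longrightarrow> z \<in> cball p (R p) \<Longrightarrow>
        \<bar>frechet_derivative (\<Phi> p) (at x) (V x) - frechet_derivative (\<Phi> p) (at z) (V z)\<bar> \<le> LG p * norm (x - z)"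
        using glipp[OF pG] .
      show "0 \<le> LG p" using LG0p[OF pG] .
      show "\<And>\<sigma>. \<sigma> \<in> closed_segment s0 s \<Longrightarrow> T \<sigma> y \<in> cball p (R p)" using inS sub by blast
      show "\<Phi> p (T s0 y) = 0" using zsp[OF pG s0in] zG by blast
      show "frechet_derivative (\<Phi> p) (at (T s0 y)) (V (T s0 y)) = 0" using gzp[OF pG s0in zG] .
    qed
    also have "\<dots> \<le> Kq * (s - s0)\<^sup>2" using KqL[OF p(1)] by (intro mult_right_mono) auto
    finally show ?thesis using p(1) inS[of s] by auto
  qed
  have part1: "infdist (T t X) \<Gamma> \<le> C * t\<^sup>2" if XG: "X \<in> \<Gamma>" and tt: "\<bar>t\<bar> \<le> t0" for X t
  proof -
    have "T 0 X \<in> \<Gamma>" using XG flow0 by simp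
    moreover have "\<bar>t - 0\<bar> \<le> 2 * t0" using tt t0 by simp
    ultimately obtain p where p: "p \<in> P" "T t X \<in> cball p (R p / 2)" "\<bar>\<Phi> p (T t X)\<bar> \<le> Kq * t\<^sup>2"
      using near by fastforce
    have pG: "p \<in> \<Gamma>" using PG[OF p(1)] .
    have "\<bar>\<Phi> p (T t X)\<bar> \<le> Kq * t0" using p(3) tsq[OF tt] by linarith
    also have "\<dots> \<le> Kq * (cmin * rmin / (48 * Kq))" using t0 Kq0 by (intro mult_left_mono) auto
    also have "\<dots> = cmin * rmin / 48" using Kq0 by simp
    also have "\<dots> \<le> Cc p * R p / 2" using crp[OF p(1)] mult_pos_pos[OF cmin(1) rmin(1)] by linarith
    finally have small: "\<bar>\<Phi> p (T t X)\<bar> \<le> Cc p * R p / 2" .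
    obtain z where z: "z \<in> cball p (R p)" "\<Phi> p z = 0" "norm (T t X - z) \<le> \<bar>\<Phi> p (T t X)\<bar> / Cc p"
      using zero_near[OF derp[OF pG] Dep[OF pG] c0p[OF pG] e1p[OF pG] p(2) small] by blast
    have zG: "z \<in> \<Gamma>" using zsp[OF pG z(1)] z(2) by blast
    have "infdist (T t X) \<Gamma> \<le> dist (T t X) z" by (rule infdist_le[OF zG])
    also have "\<dots> \<le> \<bar>\<Phi> p (T t X)\<bar> / Cc p" using z(3) by (simp add: dist_norm)
    also have "\<dots> \<le> Kq * t\<^sup>2 / Cc p" using p(3) c0p[OF pG] by (simp add: divide_right_mono)
    also have "\<dots> \<le> Kq * t\<^sup>2 / cmin"
      using cmin(1) cmin(2)[OF p(1)] Kq0 by (intro divide_left_mono) auto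
    also have "\<dots> = (Kq / cmin) * t\<^sup>2" by simp
    also have "\<dots> \<le> C * t\<^sup>2"
    proof (rule mult_right_mono)
      show "Kq / cmin \<le> C" using SKm Kq0 unfolding C_def by (simp add: add_nonneg_nonneg)
    qed simp
    finally show ?thesis .
  qed
  have part2: "emeasure lebesgue {x. indicator (T t ` \<Omega>) x \<noteq> (indicator \<Omega> x :: real)} \<le> ennreal (C * t\<^sup>2)"
    if fr: "frontier \<Omega> \<subseteq> \<Gamma>" and tt: "\<bar>t\<bar> \<le> t0" for \<Omega> t
  proof (cases "t = 0")
    case True
    have "T 0 ` \<Omega> = \<Omega>" using flow0 by simp
    then show ?thesis using True by simp
  next
    case False
    define \<delta> where "\<delta> = 4 * Kq * t\<^sup>2"
    have \<delta>0: "\<delta> > 0" using False Kq0 by (simp add: \<delta>_def)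
    define A where "A p = {x\<in>cball p (R p / 2). \<bar>\<Phi> p x\<bar> \<le> \<delta>}" for p
    have Kqt: "Kq * (s - s0)\<^sup>2 \<le> \<delta>" if "\<bar>s - s0\<bar> \<le> \<bar>t\<bar>" for s s0
    proof -
      have "(s - s0)\<^sup>2 \<le> t\<^sup>2" using that by (simp add: abs_le_square_iff)
      then have "Kq * (s - s0)\<^sup>2 \<le> Kq * t\<^sup>2" using Kq0 by simp
      moreover have "Kq * t\<^sup>2 \<ge> 0" using Kq0 by simp
      ultimately show ?thesis unfolding \<delta>_def by linarith
    qed
    have sub: "{x. indicator (T t ` \<Omega>) x \<noteq> (indicator \<Omega> x :: real)} \<subseteq> (\<Union>p\<in>P. A p)"
    proof
      fix x assume "x \<in> {x. indicator (T t ` \<Omega>) x \<noteq> (indicator \<Omega> x :: real)}"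
      then have "(x \<in> T t ` \<Omega> \<and> x \<notin> \<Omega>) \<or> (x \<in> \<Omega> \<and> x \<notin> T t ` \<Omega>)"
        by (auto simp: indicator_def split: if_splits)
      then show "x \<in> (\<Union>p\<in>P. A p)"
      proof
        assume a: "x \<in> T t ` \<Omega> \<and> x \<notin> \<Omega>"
        then obtain y where y: "y \<in> \<Omega>" "x = T t y" by blast
        obtain s0 where s0: "s0 \<in> closed_segment 0 t" "T s0 y \<in> \<Gamma>"
          using curve_cross[OF contT[of y] fr, of 0 t] y a flow0 by auto
        have d: "\<bar>t - s0\<bar> \<le> \<bar>t\<bar>"
          using dist_in_closed_segment[OF s0(1)] by (simp add: dist_real_def abs_minus_commute)
        then have "\<bar>t - s0\<bar> \<le> 2 * t0" using tt t0 by linarith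
        then obtain p where p: "p \<in> P" "T t y \<in> cball p (R p / 2)" "\<bar>\<Phi> p (T t y)\<bar> \<le> Kq * (t - s0)\<^sup>2"
          using near[OF s0(2)] by blast
        show ?thesis using p Kqt[OF d] y(2) unfolding A_def by fastforce
      next
        assume a: "x \<in> \<Omega> \<and> x \<notin> T t ` \<Omega>"
        have "T (-t) x \<notin> \<Omega>"
        proof
          assume "T (-t) x \<in> \<Omega>"
          then have "T t (T (-t) x) \<in> T t ` \<Omega>" by blast
          moreover have "T t (T (-t) x) = x" using group flow0 by simp
          ultimately show False using a by simp
        qed
        then obtain s0 where s0: "s0 \<in> closed_segment 0 (-t)" "T s0 x \<in> \<Gamma>"
          using curve_cross[OF contT[of x] fr, of 0 "-t"] a flow0 by auto
        have d: "\<bar>0 - s0\<bar> \<le> \<bar>t\<bar>"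
          using dist_in_closed_segment[OF s0(1)] by (simp add: dist_real_def)
        then have "\<bar>0 - s0\<bar> \<le> 2 * t0" using tt t0 by linarith
        then obtain p where p: "p \<in> P" "T 0 x \<in> cball p (R p / 2)" "\<bar>\<Phi> p (T 0 x)\<bar> \<le> Kq * (0 - s0)\<^sup>2"
          using near[OF s0(2)] by blast
        show ?thesis using p Kqt[OF d] flow0[of x] unfolding A_def by fastforce
      qed
    qed
    have \<delta>small: "\<delta> \<le> Cc p * R p / 12" if "p \<in> P" for p
    proof -
      have "\<delta> \<le> 4 * (Kq * t0)" using tsq[OF tt] by (simp add: \<delta>_def)
      also have "\<dots> \<le> 4 * (Kq * (cmin * rmin / (48 * Kq)))" using t0 Kq0 by (intro mult_left_mono) auto
      also have "\<dots> = cmin * rmin / 12" using Kq0 by simp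
      also have "\<dots> \<le> Cc p * R p / 12" using crp[OF that] by simp
      finally show ?thesis .
    qed
    have Al: "A p \<in> lmeasurable" if "p \<in> P" for p
    proof -
      have pG: "p \<in> \<Gamma>" using PG[OF that] .
      have "continuous_on (cball p (R p)) (\<Phi> p)"
        using derp[OF pG] has_derivative_continuous continuous_at_imp_continuous_on by blast
      then have "compact (A p)" unfolding A_def by (rule thin_compact) (use Rpos[OF pG] in simp)
      then show ?thesis by (rule lmeasurable_compact)
    qed
    have Am: "measure lebesgue (A p) \<le> Km p * \<delta>" if "p \<in> P" for p
    proof -
      have pG: "p \<in> \<Gamma>" using PG[OF that] .
      show ?thesis unfolding A_def Km_def
        by (rule thin_measure[OF derp[OF pG] Dep[OF pG] c0p[OF pG] e1p[OF pG] Rpos[OF pG] \<delta>0])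
           (use \<delta>small[OF that] in auto)
    qed
    have "emeasure lebesgue {x. indicator (T t ` \<Omega>) x \<noteq> (indicator \<Omega> x :: real)} \<le> emeasure lebesgue (\<Union>p\<in>P. A p)"
      by (rule emeasure_mono[OF sub]) (use Al P(2) in \<open>auto intro: fmeasurableD\<close>)
    also have "\<dots> \<le> (\<Sum>p\<in>P. emeasure lebesgue (A p))"
      by (rule emeasure_subadditive_finite[OF P(2)]) (use Al in \<open>auto intro: fmeasurableD\<close>)
    also have "\<dots> = (\<Sum>p\<in>P. ennreal (measure lebesgue (A p)))"
      using Al by (intro sum.cong refl emeasure_eq_measure2) auto
    also have "\<dots> \<le> (\<Sum>p\<in>P. ennreal (Km p * \<delta>))"
      using Am by (intro sum_mono ennreal_leI) auto
    also have "\<dots> = ennreal (\<Sum>p\<in>P. Km p * \<delta>)"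
      using Km0 \<delta>0 by (intro sum_ennreal) auto
    also have "\<dots> \<le> ennreal (C * t\<^sup>2)"
    proof (rule ennreal_leI)
      have "(\<Sum>p\<in>P. Km p * \<delta>) = (\<Sum>p\<in>P. Km p) * \<delta>" by (rule sum_distrib_right[symmetric])
      also have "\<dots> = (4 * Kq * (\<Sum>p\<in>P. Km p)) * t\<^sup>2" by (simp add: \<delta>_def algebra_simps)
      also have "\<dots> \<le> C * t\<^sup>2"
      proof (rule mult_right_mono)
        show "4 * Kq * (\<Sum>p\<in>P. Km p) \<le> C" using Kq0 cmin(1) unfolding C_def by simp
      qed simp
      finally show "(\<Sum>p\<in>P. Km p * \<delta>) \<le> C * t\<^sup>2" .
    qed
    finally show ?thesis .
  qed
  have clG: "closed \<Gamma>" using cpt compact_imp_closed by blast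
  show ?thesis
    apply (rule exI[of _ t0], rule conjI[OF t0(1)])
    apply (rule exI[of _ C], rule conjI[OF C0])
    using part1 part2[OF frontier_inside_subset[OF clG]] part2[OF frontier_outside_subset[OF clG]]
    by blast
qed

end
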